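(* Let $u$ and $v$ be linear functionals on $\mathbb C[\boldsymbol x]$ and $\hat u=u+v$, with $u$ and $\hat u$ quasi-definite. Then for every $n\in\mathbb Z_+$ $$\hat P_{[n]}(\boldsymbol x)=P_{[n]}(\boldsymbol x)-\big\langle v,\hat P_{[n]}(\boldsymbol y)K_{n-1}(\boldsymbol y,\boldsymbol x)\big\rangle,\qquad \hat H_{[n]}=H_{[n]}+\big\langle v,\hat P_{[n]}(\boldsymbol x)\big(P_{[n]}(\boldsymbol x)\big)^\top\big\rangle,$$ where $v$ acts on the variable $\boldsymbol y$ in the first formula.
   Context: Multi-indices ordered by graded lexicographic order; $\chi(\boldsymbol x)$ the semi-infinite vector of monomials with blocks $\chi_{[k]}=(\boldsymbol x^{\boldsymbol\alpha})_{|\boldsymbol\alpha|=k}$. For a linear functional $u$ on $\mathbb C[\boldsymbol x]$ (applied entrywise to matrices), moment matrix $G=\langle u,\chi\chi^\top\rangle$; $u$ is quasi-definite if all block truncations $G^{[k]}$ (block rows/columns $0,\dots,k-1$) are nonsingular; then $G=S^{-1}HS^{-\top}$ with $S$ block lower unitriangular, $H$ block diagonal with blocks $H_{[k]}$, and $P=S\chi$ with blocks $P_{[k]}$ are the monic multivariate orthogonal polynomials. Hatted objects refer to $\hat u$. Christoffel–Darboux kernel $K_n(\boldsymbol x,\boldsymbol y)=\sum_{m=0}^n P_{[m]}(\boldsymbol x)^\top H_{[m]}^{-1}P_{[m]}(\boldsymbol y)$, $K_{-1}=0$. *)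

theory Defs
  imports "HOL-Library.Poly_Mapping" "Jordan_Normal_Form.Determinant"
    "Jordan_Normal_Form.Gauss_Jordan_Elimination"
begin

text \<open>Multivariate polynomials in the variables indexed by a finite linearly ordered
 type 'v (so the dimension is D = CARD('v)); monomials x^alpha are multi-indices
 alpha :: 'v =>0 nat; a polynomial maps monomials to complex coefficients.\<close>

type_synonym 'v mpoly = "('v \<Rightarrow>\<^sub>0 nat) \<Rightarrow>\<^sub>0 complex"

definition mdeg :: "('v::finite \<Rightarrow>\<^sub>0 nat) \<Rightarrow> nat" where
  "mdeg \<alpha> = (\<Sum>i\<in>UNIV. Poly_Mapping.lookup \<alpha> i)"

text \<open>Lexicographic comparison: alpha comes before beta (alpha has the larger
 exponent at the first variable where they differ), so x_1^k comes first.\<close>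
definition lex_before :: "('v::linorder \<Rightarrow>\<^sub>0 nat) \<Rightarrow> ('v \<Rightarrow>\<^sub>0 nat) \<Rightarrow> bool" where
  "lex_before \<alpha> \<beta> \<longleftrightarrow> (\<exists>i. Poly_Mapping.lookup \<beta> i < Poly_Mapping.lookup \<alpha> i \<and> (\<forall>j<i. Poly_Mapping.lookup \<alpha> j = Poly_Mapping.lookup \<beta> j))"

definition glex_monos :: "nat \<Rightarrow> ('v::{finite,linorder} \<Rightarrow>\<^sub>0 nat) list" where
  "glex_monos k = (THE xs. distinct xs \<and> set xs = {\<alpha>. mdeg \<alpha> = k} \<and> sorted_wrt lex_before xs)"

definition bsize :: "'v::{finite,linorder} itself \<Rightarrow> nat \<Rightarrow> nat" where
  "bsize _ k = length (glex_monos k :: ('v \<Rightarrow>\<^sub>0 nat) list)"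

definition chi :: "nat \<Rightarrow> nat \<Rightarrow> 'v::{finite,linorder} mpoly" where
  "chi k i = Poly_Mapping.single (glex_monos k ! i) 1"

definition cpoly :: "complex \<Rightarrow> 'v mpoly" where
  "cpoly c = Poly_Mapping.single 0 c"

definition eval_mpoly :: "'v::finite mpoly \<Rightarrow> ('v \<Rightarrow> complex) \<Rightarrow> complex" where
  "eval_mpoly p x = (\<Sum>\<alpha>\<in>Poly_Mapping.keys p. Poly_Mapping.lookup p \<alpha> * (\<Prod>i\<in>UNIV. x i ^ Poly_Mapping.lookup \<alpha> i))"

definition linear_functional :: "('v mpoly \<Rightarrow> complex) \<Rightarrow> bool" where
  "linear_functional u \<longleftrightarrow> (\<forall>p q. u (p + q) = u p + u q) \<and> (\<forall>c p. u (cpoly c * p) = c * u p)"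

definition Gblock :: "('v::{finite,linorder} mpoly \<Rightarrow> complex) \<Rightarrow> nat \<Rightarrow> nat \<Rightarrow> complex mat" where
  "Gblock u k l = mat (bsize TYPE('v) k) (bsize TYPE('v) l) (\<lambda>(i,j). u (chi k i * chi l j))"

text \<open>Global indexing of chi: offset of block k, block and position of a global index.\<close>
definition boff :: "'v::{finite,linorder} itself \<Rightarrow> nat \<Rightarrow> nat" where
  "boff T k = (\<Sum>m<k. bsize T m)"

definition blk :: "'v::{finite,linorder} itself \<Rightarrow> nat \<Rightarrow> nat" where
  "blk T i = (LEAST k. i < boff T (Suc k))"

text \<open>Block truncation G^[k] (block rows/columns 0..k-1).\<close>
definition Gtrunc :: "('v::{finite,linorder} mpoly \<Rightarrow> complex) \<Rightarrow> nat \<Rightarrow> complex mat" where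
  "Gtrunc u k = mat (boff TYPE('v) k) (boff TYPE('v) k)
     (\<lambda>(i,j). Gblock u (blk TYPE('v) i) (blk TYPE('v) j) $$
                (i - boff TYPE('v) (blk TYPE('v) i), j - boff TYPE('v) (blk TYPE('v) j)))"

definition quasi_definite :: "('v::{finite,linorder} mpoly \<Rightarrow> complex) \<Rightarrow> bool" where
  "quasi_definite u \<longleftrightarrow> (\<forall>k. det (Gtrunc u k) \<noteq> 0)"

text \<open>Block factorization G = S^{-1} H S^{-T}, written equivalently as S G S^T = H
 (S is block lower unitriangular, hence invertible; all block sums are finite):
 S k l is the (k,l) block of S and H k the k-th diagonal block of H.\<close>
definition is_factorization ::
  "('v::{finite,linorder} mpoly \<Rightarrow> complex) \<Rightarrow> (nat \<Rightarrow> nat \<Rightarrow> complex mat) \<Rightarrow> (nat \<Rightarrow> complex mat) \<Rightarrow> bool" where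
  "is_factorization u S H \<longleftrightarrow>
     (\<forall>k l. S k l \<in> carrier_mat (bsize TYPE('v) k) (bsize TYPE('v) l)) \<and>
     (\<forall>k. S k k = 1\<^sub>m (bsize TYPE('v) k)) \<and>
     (\<forall>k l. k < l \<longrightarrow> S k l = 0\<^sub>m (bsize TYPE('v) k) (bsize TYPE('v) l)) \<and>
     (\<forall>k. H k \<in> carrier_mat (bsize TYPE('v) k) (bsize TYPE('v) k)) \<and>
     (\<forall>k l i j. i < bsize TYPE('v) k \<longrightarrow> j < bsize TYPE('v) l \<longrightarrow>
        (\<Sum>a\<le>k. \<Sum>b\<le>l. (S k a * Gblock u a b * (S l b)\<^sup>T) $$ (i,j)) =
        (if k = l then H k $$ (i,j) else 0))"

definition Sfac :: "('v::{finite,linorder} mpoly \<Rightarrow> complex) \<Rightarrow> nat \<Rightarrow> nat \<Rightarrow> complex mat" where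
  "Sfac u = (THE S. \<exists>H. is_factorization u S H)"

definition Hfac :: "('v::{finite,linorder} mpoly \<Rightarrow> complex) \<Rightarrow> nat \<Rightarrow> complex mat" where
  "Hfac u = (THE H. \<exists>S. is_factorization u S H)"

text \<open>The block P_[n] = sum_{m<=n} S_{[n],[m]} chi_[m] of the monic MOPs P = S chi.\<close>
definition MOP :: "('v::{finite,linorder} mpoly \<Rightarrow> complex) \<Rightarrow> nat \<Rightarrow> 'v mpoly vec" where
  "MOP u n = vec (bsize TYPE('v) n)
     (\<lambda>i. \<Sum>m\<le>n. \<Sum>j<bsize TYPE('v) m. cpoly (Sfac u n m $$ (i,j)) * chi m j)"

text \<open>Christoffel--Darboux kernel K_{n-1}(y,x) = sum_{m<n} P_[m](y)^T H_[m]^{-1} P_[m](x),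
 for a fixed point x, as a polynomial in y (K_{-1} = 0 is the case n = 0).\<close>
definition CD_kernel_y :: "('v::{finite,linorder} mpoly \<Rightarrow> complex) \<Rightarrow> nat \<Rightarrow> ('v \<Rightarrow> complex) \<Rightarrow> 'v mpoly" where
  "CD_kernel_y u n x = (\<Sum>m<n. \<Sum>a<bsize TYPE('v) m. \<Sum>b<bsize TYPE('v) m.
      MOP u m $ a * cpoly (the (mat_inverse (Hfac u m)) $$ (a,b) * eval_mpoly (MOP u m $ b) x))"

end

theory Submission
  imports Defs
begin

lemma lf_add: "linear_functional u \<Longrightarrow> u (p + q) = u p + u q"
  by (simp add: linear_functional_def)

lemma lf_smult: "linear_functional u \<Longrightarrow> u (cpoly c * p) = c * u p"
  by (simp add: linear_functional_def)

lemma lf_zero: "linear_functional u \<Longrightarrow> u 0 = 0"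
  using lf_add[of u 0 0] by simp

lemma lf_neg: "linear_functional u \<Longrightarrow> u (- p) = - u p"
  using lf_add[of u p "-p"] lf_zero[of u] by (simp add: eq_neg_iff_add_eq_0 add.commute)

lemma lf_diff: "linear_functional u \<Longrightarrow> u (p - q) = u p - u q"
  using lf_add[of u p "-q"] lf_neg[of u q] by simp

lemma lf_sum: "linear_functional u \<Longrightarrow> u (\<Sum>x\<in>A. f x) = (\<Sum>x\<in>A. u (f x))"
  by (induction A rule: infinite_finite_induct) (auto simp: lf_zero lf_add)

lemma lf_plus: "linear_functional u \<Longrightarrow> linear_functional v \<Longrightarrow> linear_functional (\<lambda>p. u p + v p)"
  by (simp add: linear_functional_def algebra_simps)

lemma cpoly_mult: "cpoly a * cpoly b = cpoly (a * b)"
  by (simp add: cpoly_def mult_single)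

lemma cpoly_add: "cpoly a + cpoly b = cpoly (a + b)"
  by (simp add: cpoly_def single_add)

lemma cpoly_0[simp]: "cpoly 0 = 0"
  by (simp add: cpoly_def)

lemma cpoly_1[simp]: "cpoly 1 = 1"
  by (simp add: cpoly_def)

lemma cpoly_diff: "cpoly a - cpoly b = cpoly (a - b)"
  by (simp add: cpoly_def single_diff)

lemma cpoly_sum: "(\<Sum>x\<in>A. cpoly (f x)) = cpoly (\<Sum>x\<in>A. f x)"
  by (induction A rule: infinite_finite_induct) (auto simp: cpoly_add)

section \<open>Flat indices\<close>

lemma boff_Suc: "boff T (Suc k) = boff T k + bsize T k"
  by (simp add: boff_def)

lemma boff_mono: "k \<le> l \<Longrightarrow> boff T k \<le> boff T l"
  unfolding boff_def by (rule sum_mono2) auto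

lemma blk_eq: assumes "j < bsize T m" shows "blk T (boff T m + j) = m"
  unfolding blk_def
proof (rule Least_equality)
  show "boff T m + j < boff T (Suc m)" using assms by (simp add: boff_Suc)
next
  fix y assume a: "boff T m + j < boff T (Suc y)"
  show "m \<le> y"
  proof (rule ccontr)
    assume "\<not> m \<le> y" then have "Suc y \<le> m" by simp
    from boff_mono[OF this, of T] a show False by simp
  qed
qed

lemma flat_decomp: "h < boff T N \<Longrightarrow> \<exists>k<N. \<exists>c<bsize T k. h = boff T k + c"
proof (induction N)
  case 0 then show ?case by (simp add: boff_def)
next
  case (Suc N)
  show ?case
  proof (cases "h < boff T N")
    case True with Suc.IH show ?thesis by (meson less_SucI)
  next
    case False
    then show ?thesis using Suc.prems
      by (intro exI[of _ N]) (auto simp: boff_Suc intro!: exI[of _ "h - boff T N"])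
  qed
qed

lemma sum_lessThan_add: "(\<Sum>g<a+(b::nat). f g) = (\<Sum>g<a. f g) + (\<Sum>j<b. f (a + j))"
  by (induction b) (auto simp: add.assoc)

lemma sum_flat: "(\<Sum>g<boff T N. f g) = (\<Sum>m<N. \<Sum>j<bsize T m. f (boff T m + j))"
proof (induction N)
  case 0 then show ?case by (simp add: boff_def)
next
  case (Suc N) then show ?case by (simp add: boff_Suc sum_lessThan_add)
qed

lemma boff_lt: "m < N \<Longrightarrow> j < bsize T m \<Longrightarrow> boff T m + j < boff T N"
  using boff_mono[of "Suc m" N T] by (simp add: boff_Suc)

lemma Gtrunc_entry:
  fixes u :: "'v::{finite,linorder} mpoly \<Rightarrow> complex"
  assumes "m < N" "j < bsize TYPE('v) m" "k < N" "c < bsize TYPE('v) k"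
  shows "Gtrunc u N $$ (boff TYPE('v) m + j, boff TYPE('v) k + c) = u (chi m j * chi k c)"
  using assms boff_lt[of m N j "TYPE('v)"] boff_lt[of k N c "TYPE('v)"]
  by (simp add: Gtrunc_def blk_eq Gblock_def)

section \<open>Finite linear combinations of monomials\<close>

definition lin :: "nat \<Rightarrow> (nat \<Rightarrow> nat \<Rightarrow> complex) \<Rightarrow> 'v::{finite,linorder} mpoly" where
  "lin N d = (\<Sum>m<N. \<Sum>j<bsize TYPE('v) m. cpoly (d m j) * chi m j)"

lemma u_lin_left:
  fixes u :: "'v::{finite,linorder} mpoly \<Rightarrow> complex"
  assumes "linear_functional u"
  shows "u (lin N d * q) = (\<Sum>m<N. \<Sum>j<bsize TYPE('v) m. d m j * u (chi m j * q))"
  unfolding lin_def sum_distrib_right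
  by (simp add: lf_sum[OF assms] mult.assoc lf_smult[OF assms])

lemma u_lin_right:
  fixes u :: "'v::{finite,linorder} mpoly \<Rightarrow> complex"
  assumes "linear_functional u"
  shows "u (q * lin N d) = (\<Sum>m<N. \<Sum>j<bsize TYPE('v) m. d m j * u (chi m j * q))"
  using u_lin_left[OF assms] by (simp add: mult.commute)

lemma lin_add: "lin N d1 + lin N d2 = (lin N (\<lambda>m j. d1 m j + d2 m j) :: 'v::{finite,linorder} mpoly)"
  unfolding lin_def by (simp add: sum.distrib[symmetric] distrib_right cpoly_add[symmetric])

lemma lin_diff: "lin N d1 - lin N d2 = (lin N (\<lambda>m j. d1 m j - d2 m j) :: 'v::{finite,linorder} mpoly)"
  unfolding lin_def by (simp add: sum_subtractf[symmetric] left_diff_distrib cpoly_diff[symmetric])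

lemma lin_smult: "cpoly c * lin N d = (lin N (\<lambda>m j. c * d m j) :: 'v::{finite,linorder} mpoly)"
  unfolding lin_def by (simp add: sum_distrib_left mult.assoc[symmetric] cpoly_mult)

lemma lin_zero: "lin N (\<lambda>m j. 0) = (0 :: 'v::{finite,linorder} mpoly)"
  unfolding lin_def by simp

lemma lin_sum: "(\<Sum>x\<in>A. lin N (d x)) = (lin N (\<lambda>m j. \<Sum>x\<in>A. d x m j) :: 'v::{finite,linorder} mpoly)"
  by (induction A rule: infinite_finite_induct) (auto simp: lin_zero lin_add)

lemma lin_Suc: "lin (Suc N) d = lin N d + (\<Sum>j<bsize TYPE('v) N. cpoly (d N j) * chi N j :: 'v::{finite,linorder} mpoly)"
  unfolding lin_def by simp

lemma lin_extend:
  assumes "N \<le> M"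
  shows "lin N d = (lin M (\<lambda>m j. if m < N then d m j else 0) :: 'v::{finite,linorder} mpoly)"
  using assms
proof (induction M)
  case 0 then show ?case by (simp add: lin_def)
next
  case (Suc M)
  show ?case
  proof (cases "N \<le> M")
    case True
    then show ?thesis using Suc.IH by (simp add: lin_Suc)
  next
    case False
    then have "N = Suc M" using Suc.prems by simp
    then show ?thesis unfolding lin_def by (intro sum.cong) auto
  qed
qed

lemma nondeg:
  fixes u :: "'v::{finite,linorder} mpoly \<Rightarrow> complex"
  assumes lf: "linear_functional u" and qd: "quasi_definite u"
    and orth: "\<forall>k<N. \<forall>c<bsize TYPE('v) k. u (lin N d * chi k c) = 0"
    and mj: "m < N" "j < bsize TYPE('v) m"
  shows "d m j = 0"
proof -
  define w where "w = vec (boff TYPE('v) N) (\<lambda>g. d (blk TYPE('v) g) (g - boff TYPE('v) (blk TYPE('v) g)))"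
  have wv: "w $ (boff TYPE('v) m' + j') = d m' j'" if "m' < N" "j' < bsize TYPE('v) m'" for m' j'
    using that boff_lt[OF that] by (simp add: w_def blk_eq)
  have A: "Gtrunc u N \<in> carrier_mat (boff TYPE('v) N) (boff TYPE('v) N)"
    by (simp add: Gtrunc_def)
  have w: "w \<in> carrier_vec (boff TYPE('v) N)" by (simp add: w_def)
  have Aw: "Gtrunc u N *\<^sub>v w = 0\<^sub>v (boff TYPE('v) N)"
  proof (rule eq_vecI)
    fix h assume "h < dim_vec (0\<^sub>v (boff TYPE('v) N) :: complex vec)"
    then have h: "h < boff TYPE('v) N" by simp
    then obtain k c where kc: "k < N" "c < bsize TYPE('v) k" "h = boff TYPE('v) k + c"
      using flat_decomp by blast
    have "(Gtrunc u N *\<^sub>v w) $ h = (\<Sum>g<boff TYPE('v) N. Gtrunc u N $$ (h, g) * w $ g)"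
      using h A w by (simp add: scalar_prod_def atLeast0LessThan)
    also have "\<dots> = (\<Sum>m'<N. \<Sum>j'<bsize TYPE('v) m'. Gtrunc u N $$ (h, boff TYPE('v) m' + j') * w $ (boff TYPE('v) m' + j'))"
      by (rule sum_flat)
    also have "\<dots> = (\<Sum>m'<N. \<Sum>j'<bsize TYPE('v) m'. d m' j' * u (chi m' j' * chi k c))"
      using kc by (intro sum.cong refl) (simp add: Gtrunc_entry wv mult.commute)
    also have "\<dots> = u (lin N d * chi k c)" by (simp add: u_lin_left[OF lf])
    also have "\<dots> = 0" using orth kc by simp
    finally show "(Gtrunc u N *\<^sub>v w) $ h = 0\<^sub>v (boff TYPE('v) N) $ h" using h by simp
  qed (simp add: Gtrunc_def)
  have "det (Gtrunc u N) \<noteq> 0" using qd by (simp add: quasi_definite_def)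
  then have "w = 0\<^sub>v (boff TYPE('v) N)" using det_0_iff_vec_prod_zero[OF A] w Aw by blast
  then show ?thesis using wv[OF mj] boff_lt[OF mj] by simp
qed

definition MOPs :: "(nat \<Rightarrow> nat \<Rightarrow> complex mat) \<Rightarrow> nat \<Rightarrow> nat \<Rightarrow> 'v::{finite,linorder} mpoly" where
  "MOPs S k i = lin (Suc k) (\<lambda>m j. S k m $$ (i,j))"

lemma fact_entry:
  fixes u :: "'v::{finite,linorder} mpoly \<Rightarrow> complex"
  assumes lf: "linear_functional u"
    and car: "\<forall>k l. S k l \<in> carrier_mat (bsize TYPE('v) k) (bsize TYPE('v) l)"
    and ij: "i < bsize TYPE('v) k" "j < bsize TYPE('v) l"
  shows "(\<Sum>a\<le>k. \<Sum>b\<le>l. (S k a * Gblock u a b * (S l b)\<^sup>T) $$ (i,j))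
         = u ((MOPs S k i :: 'v mpoly) * MOPs S l j)"
proof -
  have entry: "(S k a * Gblock u a b * (S l b)\<^sup>T) $$ (i,j) =
     (\<Sum>d<bsize TYPE('v) b. \<Sum>c<bsize TYPE('v) a. S k a $$ (i,c) * u (chi a c * chi b d) * S l b $$ (j,d))"
    for a b
  proof -
    have d1: "dim_row (S k a) = bsize TYPE('v) k" "dim_col (S k a) = bsize TYPE('v) a"
      "dim_row (S l b) = bsize TYPE('v) l" "dim_col (S l b) = bsize TYPE('v) b"
      using car by (auto dest: spec[of _ k] spec[of _ l])
    show ?thesis using ij d1
      by (simp add: Gblock_def scalar_prod_def atLeast0LessThan sum_distrib_right)
  qed
  have L: "(\<Sum>a\<le>k. \<Sum>b\<le>l. (S k a * Gblock u a b * (S l b)\<^sup>T) $$ (i,j)) =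
     (\<Sum>a\<le>k. \<Sum>b\<le>l. \<Sum>d<bsize TYPE('v) b. \<Sum>c<bsize TYPE('v) a. S k a $$ (i,c) * u (chi a c * chi b d) * S l b $$ (j,d))"
    by (simp add: entry)
  have R: "u ((MOPs S k i :: 'v mpoly) * MOPs S l j) =
     (\<Sum>a\<le>k. \<Sum>c<bsize TYPE('v) a. \<Sum>b\<le>l. \<Sum>d<bsize TYPE('v) b. S k a $$ (i,c) * (S l b $$ (j,d) * u (chi b d * chi a c)))"
    unfolding MOPs_def u_lin_left[OF lf] unfolding u_lin_right[OF lf]
    by (simp only: lessThan_Suc_atMost sum_distrib_left)
  have leaf: "S k a $$ (i,c) * u (chi a c * chi b d) * S l b $$ (j,d) = S k a $$ (i,c) * (S l b $$ (j,d) * u (chi b d * chi a c))"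
    for a b c d
  proof -
    have "u (chi a c * chi b d) = u (chi b d * chi a c)" by (metis mult.commute)
    then show ?thesis by (simp add: mult_ac)
  qed
  show ?thesis unfolding L R
  proof (rule sum.cong[OF refl])
    fix a
    show "(\<Sum>b\<le>l. \<Sum>d<bsize TYPE('v) b. \<Sum>c<bsize TYPE('v) a. S k a $$ (i,c) * u (chi a c * chi b d) * S l b $$ (j,d)) =
      (\<Sum>c<bsize TYPE('v) a. \<Sum>b\<le>l. \<Sum>d<bsize TYPE('v) b. S k a $$ (i,c) * (S l b $$ (j,d) * u (chi b d * chi a c)))"
    proof -
      let ?F = "\<lambda>b d c. S k a $$ (i,c) * (S l b $$ (j,d) * u (chi b d * chi a c))"
      have "(\<Sum>b\<le>l. \<Sum>d<bsize TYPE('v) b. \<Sum>c<bsize TYPE('v) a. S k a $$ (i,c) * u (chi a c * chi b d) * S l b $$ (j,d)) =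
            (\<Sum>b\<le>l. \<Sum>d<bsize TYPE('v) b. \<Sum>c<bsize TYPE('v) a. ?F b d c)"
        by (simp only: leaf)
      also have "\<dots> = (\<Sum>b\<le>l. \<Sum>c<bsize TYPE('v) a. \<Sum>d<bsize TYPE('v) b. ?F b d c)"
        by (rule sum.cong[OF refl]) (rule sum.swap)
      also have "\<dots> = (\<Sum>c<bsize TYPE('v) a. \<Sum>b\<le>l. \<Sum>d<bsize TYPE('v) b. ?F b d c)"
        by (rule sum.swap)
      finally show ?thesis .
    qed
  qed
qed

lemma fact_poly:
  fixes u :: "'v::{finite,linorder} mpoly \<Rightarrow> complex"
  assumes lf: "linear_functional u" and f: "is_factorization u S H"
    and ij: "i < bsize TYPE('v) k" "j < bsize TYPE('v) l"
  shows "u ((MOPs S k i :: 'v mpoly) * MOPs S l j) = (if k = l then H k $$ (i,j) else 0)"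
proof -
  have car: "\<forall>k l. S k l \<in> carrier_mat (bsize TYPE('v) k) (bsize TYPE('v) l)"
    using f by (simp add: is_factorization_def)
  have eq: "(\<Sum>a\<le>k. \<Sum>b\<le>l. (S k a * Gblock u a b * (S l b)\<^sup>T) $$ (i,j)) = (if k = l then H k $$ (i,j) else 0)"
    using f ij unfolding is_factorization_def by blast
  show ?thesis using eq fact_entry[OF lf car ij] by simp
qed

lemma fact_diag:
  fixes u :: "'v::{finite,linorder} mpoly \<Rightarrow> complex"
  shows "is_factorization u S H \<Longrightarrow> S k k = 1\<^sub>m (bsize TYPE('v) k)"
  by (simp add: is_factorization_def)

lemma MOPs_split:
  assumes "S k k = 1\<^sub>m (bsize TYPE('v::{finite,linorder}) k)" "i < bsize TYPE('v) k"
  shows "(MOPs S k i :: 'v mpoly) = lin k (\<lambda>m j. S k m $$ (i,j)) + chi k i"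
proof -
  have "(\<Sum>j<bsize TYPE('v) k. cpoly (S k k $$ (i,j)) * (chi k j :: 'v mpoly)) =
        (\<Sum>j<bsize TYPE('v) k. if j = i then chi k j else 0)"
    using assms by (intro sum.cong) auto
  also have "\<dots> = chi k i" using assms by simp
  finally show ?thesis unfolding MOPs_def lin_Suc by simp
qed

lemma ortho_lin:
  fixes u :: "'v::{finite,linorder} mpoly \<Rightarrow> complex"
  assumes lf: "linear_functional u"
    and o: "\<forall>l<k. \<forall>c<bsize TYPE('v) l. u (p * chi l c) = 0" and "N \<le> k"
  shows "u (p * lin N d) = 0"
  unfolding u_lin_right[OF lf]
  using o assms(3) by (intro sum.neutral ballI) (auto simp: mult.commute)

lemma conv:
  fixes u :: "'v::{finite,linorder} mpoly \<Rightarrow> complex"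
  assumes lf: "linear_functional u" and diag: "\<forall>k. S k k = 1\<^sub>m (bsize TYPE('v) k)"
    and o: "\<forall>l<N. \<forall>c<bsize TYPE('v) l. u (q * MOPs S l c) = 0"
  shows "l < N \<Longrightarrow> c < bsize TYPE('v) l \<Longrightarrow> u (q * chi l c) = 0"
proof (induction l arbitrary: c rule: less_induct)
  case (less l)
  have "chi l c = (MOPs S l c :: 'v mpoly) - lin l (\<lambda>m j. S l m $$ (c,j))"
    using MOPs_split[of S l c, OF diag[rule_format] less.prems(2)] by simp
  then have "u (q * chi l c) = u (q * MOPs S l c) - u (q * lin l (\<lambda>m j. S l m $$ (c,j)))"
    by (simp add: right_diff_distrib lf_diff[OF lf])
  also have "u (q * lin l (\<lambda>m j. S l m $$ (c,j))) = 0"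
    using less.IH less.prems by (intro ortho_lin[OF lf, where k=l]) auto
  finally show ?case using o less.prems by simp
qed

lemma ortho_chi:
  fixes u :: "'v::{finite,linorder} mpoly \<Rightarrow> complex"
  assumes lf: "linear_functional u" and f: "is_factorization u S H"
    and "l < k" "i < bsize TYPE('v) k" "c < bsize TYPE('v) l"
  shows "u ((MOPs S k i :: 'v mpoly) * chi l c) = 0"
  using conv[OF lf, of S k "MOPs S k i" l c] fact_poly[OF lf f] fact_diag[OF f] assms(3-)
  by auto

section \<open>Uniqueness and existence of the factorization\<close>

lemma MOPs_diff:
  fixes u :: "'v::{finite,linorder} mpoly \<Rightarrow> complex"
    and u' :: "'v mpoly \<Rightarrow> complex"
  assumes "is_factorization u S H" "is_factorization u' S' H'" "i < bsize TYPE('v) k"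
  shows "(MOPs S k i :: 'v mpoly) - MOPs S' k i = lin k (\<lambda>m j. S k m $$ (i,j) - S' k m $$ (i,j))"
  using MOPs_split[of S k i, OF fact_diag[OF assms(1)] assms(3)]
    MOPs_split[of S' k i, OF fact_diag[OF assms(2)] assms(3)]
  by (simp add: lin_diff[symmetric])

lemma fact_unique:
  fixes u :: "'v::{finite,linorder} mpoly \<Rightarrow> complex"
  assumes lf: "linear_functional u" and qd: "quasi_definite u"
    and f1: "is_factorization u S H" and f2: "is_factorization u S' H'"
  shows "S = S' \<and> H = H'"
proof -
  have Seq: "S k m = S' k m" for k m
  proof -
    have c1: "S k m \<in> carrier_mat (bsize TYPE('v) k) (bsize TYPE('v) m)"
      and c2: "S' k m \<in> carrier_mat (bsize TYPE('v) k) (bsize TYPE('v) m)"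
      using f1 f2 by (auto simp: is_factorization_def)
    consider "m < k" | "m = k" | "k < m" by linarith
    then show ?thesis
    proof cases
      case 1
      show ?thesis
      proof (rule eq_matI)
        fix i j assume "i < dim_row (S' k m)" "j < dim_col (S' k m)"
        then have ij: "i < bsize TYPE('v) k" "j < bsize TYPE('v) m" using c2 by auto
        have "u (lin k (\<lambda>m j. S k m $$ (i,j) - S' k m $$ (i,j)) * chi l c) = 0"
          if "l < k" "c < bsize TYPE('v) l" for l c
        proof -
          have "u (lin k (\<lambda>m j. S k m $$ (i,j) - S' k m $$ (i,j)) * chi l c) =
                u ((MOPs S k i :: 'v mpoly) * chi l c) - u ((MOPs S' k i :: 'v mpoly) * chi l c)"
            unfolding MOPs_diff[OF f1 f2 ij(1), symmetric] by (simp add: left_diff_distrib lf_diff[OF lf])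
          then show ?thesis using ortho_chi[OF lf f1 that(1) ij(1) that(2)] ortho_chi[OF lf f2 that(1) ij(1) that(2)]
            by simp
        qed
        then have "S k m $$ (i,j) - S' k m $$ (i,j) = 0"
          using nondeg[OF lf qd, of k "\<lambda>m j. S k m $$ (i,j) - S' k m $$ (i,j)" m j] 1 ij by blast
        then show "S k m $$ (i,j) = S' k m $$ (i,j)" by simp
      qed (use c1 c2 in auto)
    next
      case 2 then show ?thesis using f1 f2 by (simp add: is_factorization_def)
    next
      case 3 then show ?thesis using f1 f2 by (simp add: is_factorization_def)
    qed
  qed
  then have SS: "S = S'" by (intro ext)
  have "H k = H' k" for k
  proof -
    have c1: "H k \<in> carrier_mat (bsize TYPE('v) k) (bsize TYPE('v) k)"
      and c2: "H' k \<in> carrier_mat (bsize TYPE('v) k) (bsize TYPE('v) k)"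
      using f1 f2 by (auto simp: is_factorization_def)
    show ?thesis
    proof (rule eq_matI)
      fix i j assume "i < dim_row (H' k)" "j < dim_col (H' k)"
      then have ij: "i < bsize TYPE('v) k" "j < bsize TYPE('v) k" using c2 by auto
      show "H k $$ (i,j) = H' k $$ (i,j)"
        using fact_poly[OF lf f1 ij] fact_poly[OF lf f2 ij] SS by simp
    qed (use c1 c2 in auto)
  qed
  then show ?thesis using SS by auto
qed

lemma inverse_exists:
  assumes A: "A \<in> carrier_mat n n" and d: "det A \<noteq> (0::complex)"
  shows "A * the (mat_inverse A) = 1\<^sub>m n \<and> the (mat_inverse A) * A = 1\<^sub>m n \<and> the (mat_inverse A) \<in> carrier_mat n n"
proof -
  have "A \<in> Units (ring_mat TYPE(complex) n n)" by (rule det_non_zero_imp_unit[OF A d])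
  then have "mat_inverse A \<noteq> None" using mat_inverse(1)[OF A, where b=n] by blast
  then obtain B where "mat_inverse A = Some B" by auto
  then show ?thesis using mat_inverse(2)[OF A] by simp
qed

lemma fact_exists:
  fixes u :: "'v::{finite,linorder} mpoly \<Rightarrow> complex"
  assumes lf: "linear_functional u" and qd: "quasi_definite u"
  shows "\<exists>S H. is_factorization u S H"
proof -
  define B where "B n = the (mat_inverse (Gtrunc u n))" for n
  define r where "r n i = vec (boff TYPE('v) n) (\<lambda>h. - u (chi n i * chi (blk TYPE('v) h) (h - boff TYPE('v) (blk TYPE('v) h))))" for n i
  define s where "s n i = B n *\<^sub>v r n i" for n i
  define S where "S n m = (if m < n then mat (bsize TYPE('v) n) (bsize TYPE('v) m) (\<lambda>(i,j). s n i $ (boff TYPE('v) m + j))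
     else if m = n then 1\<^sub>m (bsize TYPE('v) n) else 0\<^sub>m (bsize TYPE('v) n) (bsize TYPE('v) m))" for n m
  have A: "Gtrunc u n \<in> carrier_mat (boff TYPE('v) n) (boff TYPE('v) n)" for n
    by (simp add: Gtrunc_def)
  have Binv: "Gtrunc u n * B n = 1\<^sub>m (boff TYPE('v) n)" "B n \<in> carrier_mat (boff TYPE('v) n) (boff TYPE('v) n)" for n
    using inverse_exists[OF A] qd unfolding B_def quasi_definite_def by blast+
  have As: "Gtrunc u n *\<^sub>v s n i = r n i" for n i
  proof -
    have "Gtrunc u n *\<^sub>v s n i = (Gtrunc u n * B n) *\<^sub>v r n i"
      unfolding s_def by (rule assoc_mult_mat_vec[symmetric, OF A Binv(2)]) (simp add: r_def)
    also have "\<dots> = r n i" by (simp add: Binv(1) r_def)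
    finally show ?thesis .
  qed
  have sdim: "dim_vec (s n i) = boff TYPE('v) n" for n i
    using Binv(2)[of n] by (simp add: s_def)
  have diag: "\<forall>k. S k k = 1\<^sub>m (bsize TYPE('v) k)" by (simp add: S_def)
  have orth: "u ((MOPs S n i :: 'v mpoly) * chi k c) = 0"
    if kc: "k < n" "c < bsize TYPE('v) k" and i: "i < bsize TYPE('v) n" for n i k c
  proof -
    have hb: "boff TYPE('v) k + c < boff TYPE('v) n" using boff_lt[OF kc] .
    have "u (lin n (\<lambda>m j. S n m $$ (i,j)) * chi k c) =
          (\<Sum>m<n. \<Sum>j<bsize TYPE('v) m. S n m $$ (i,j) * u (chi m j * chi k c))"
      by (rule u_lin_left[OF lf])
    also have "\<dots> = (\<Sum>m<n. \<Sum>j<bsize TYPE('v) m. Gtrunc u n $$ (boff TYPE('v) k + c, boff TYPE('v) m + j) * s n i $ (boff TYPE('v) m + j))"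
      using kc i by (intro sum.cong refl) (simp add: S_def Gtrunc_entry mult.commute)
    also have "\<dots> = (\<Sum>g<boff TYPE('v) n. Gtrunc u n $$ (boff TYPE('v) k + c, g) * s n i $ g)"
      by (rule sum_flat[symmetric])
    also have "\<dots> = (Gtrunc u n *\<^sub>v s n i) $ (boff TYPE('v) k + c)"
      using hb A[of n] sdim[of n i] by (simp add: scalar_prod_def atLeast0LessThan Gtrunc_def)
    also have "\<dots> = - u (chi n i * chi k c)"
      using hb kc by (simp add: As r_def blk_eq)
    finally have "u (lin n (\<lambda>m j. S n m $$ (i,j)) * chi k c) = - u (chi n i * chi k c)" .
    then show ?thesis
      unfolding MOPs_split[of S n i, OF diag[rule_format] i]
      by (simp add: distrib_right lf_add[OF lf])
  qed
  define H where "H n = mat (bsize TYPE('v) n) (bsize TYPE('v) n) (\<lambda>(i,j). u ((MOPs S n i :: 'v mpoly) * MOPs S n j))" for n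
  have car: "\<forall>k l. S k l \<in> carrier_mat (bsize TYPE('v) k) (bsize TYPE('v) l)"
    by (simp add: S_def)
  have ortho2: "u ((MOPs S k i :: 'v mpoly) * MOPs S l j) = 0"
    if "l < k" "i < bsize TYPE('v) k" for k l i j
    unfolding MOPs_def[of S l j]
    using orth that by (intro ortho_lin[OF lf, where k=k]) auto
  have "is_factorization u S H"
    unfolding is_factorization_def
  proof (intro conjI allI impI)
    fix k l i j assume ij: "i < bsize TYPE('v) k" "j < bsize TYPE('v) l"
    have "u ((MOPs S k i :: 'v mpoly) * MOPs S l j) = (if k = l then H k $$ (i,j) else 0)"
    proof (cases "k = l")
      case True then show ?thesis using ij by (simp add: H_def)
    next
      case False
      then consider "l < k" | "k < l" by linarith
      then show ?thesis
      proof cases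
        case 1 then show ?thesis using ortho2 ij False by simp
      next
        case 2 then show ?thesis using ortho2[OF 2 ij(2), of i] False by (simp add: mult.commute)
      qed
    qed
    then show "(\<Sum>a\<le>k. \<Sum>b\<le>l. (S k a * Gblock u a b * (S l b)\<^sup>T) $$ (i, j)) = (if k = l then H k $$ (i, j) else 0)"
      using fact_entry[OF lf car ij] by simp
  qed (auto simp: S_def H_def)
  then show ?thesis by blast
qed

lemma fact_Sfac:
  fixes u :: "'v::{finite,linorder} mpoly \<Rightarrow> complex"
  assumes lf: "linear_functional u" and qd: "quasi_definite u"
  shows "is_factorization u (Sfac u) (Hfac u)"
proof -
  obtain S H where f: "is_factorization u S H" using fact_exists[OF lf qd] by blast
  have "Sfac u = S" unfolding Sfac_def
    using f fact_unique[OF lf qd f] by (intro the_equality) blast+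
  moreover have "Hfac u = H" unfolding Hfac_def
    using f fact_unique[OF lf qd f] by (intro the_equality) blast+
  ultimately show ?thesis using f by simp
qed

lemma MOP_eq:
  fixes u :: "'v::{finite,linorder} mpoly \<Rightarrow> complex"
  assumes "i < bsize TYPE('v) n"
  shows "MOP u n $ i = MOPs (Sfac u) n i"
  using assms by (simp add: MOP_def MOPs_def lin_def lessThan_Suc_atMost)

lemma lookup_cpoly_mult: "Poly_Mapping.lookup (cpoly c * p) a = c * Poly_Mapping.lookup p a"
  unfolding cpoly_def lookup_mult lookup_single
  by (simp add: when_mult Sum_any_right_distrib[symmetric] mult_when)

definition mon :: "('v::finite \<Rightarrow>\<^sub>0 nat) \<Rightarrow> ('v \<Rightarrow> complex) \<Rightarrow> complex" where
  "mon a x = (\<Prod>i\<in>UNIV. x i ^ Poly_Mapping.lookup a i)"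

lemma eval_keys:
  assumes "finite A" "Poly_Mapping.keys p \<subseteq> A"
  shows "eval_mpoly p x = (\<Sum>a\<in>A. Poly_Mapping.lookup p a * mon a x)"
  unfolding eval_mpoly_def mon_def
  by (rule sum.mono_neutral_left[OF assms]) (auto simp: in_keys_iff)

lemma eval_add: "eval_mpoly (p + q) x = eval_mpoly p x + eval_mpoly q x"
proof -
  let ?A = "Poly_Mapping.keys p \<union> Poly_Mapping.keys q"
  have f: "finite ?A" by simp
  have k: "Poly_Mapping.keys (p + q) \<subseteq> ?A" by (rule keys_add)
  show ?thesis
    unfolding eval_keys[OF f k] eval_keys[OF f Un_upper1] eval_keys[OF f Un_upper2]
    by (simp add: lookup_add distrib_right sum.distrib)
qed

lemma eval_zero: "eval_mpoly 0 x = 0"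
  by (simp add: eval_mpoly_def)

lemma eval_neg: "eval_mpoly (- p) x = - eval_mpoly p x"
  using eval_add[of p "-p" x] eval_zero[of x] by (simp add: eq_neg_iff_add_eq_0 add.commute)

lemma eval_diff: "eval_mpoly (p - q) x = eval_mpoly p x - eval_mpoly q x"
  using eval_add[of p "-q" x] eval_neg[of q x] by simp

lemma eval_sum: "eval_mpoly (\<Sum>y\<in>A. f y) x = (\<Sum>y\<in>A. eval_mpoly (f y) x)"
  by (induction A rule: infinite_finite_induct) (auto simp: eval_zero eval_add)

lemma eval_smult: "eval_mpoly (cpoly c * p) x = c * eval_mpoly p x"
proof -
  have f: "finite (Poly_Mapping.keys p)" by simp
  have k: "Poly_Mapping.keys (cpoly c * p) \<subseteq> Poly_Mapping.keys p"
    by (auto simp: in_keys_iff lookup_cpoly_mult)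
  show ?thesis
    unfolding eval_keys[OF f order.refl] eval_keys[OF f k]
    by (simp add: lookup_cpoly_mult sum_distrib_left mult.assoc)
qed

section \<open>Invertibility of H\<close>

lemma H_det:
  fixes u :: "'v::{finite,linorder} mpoly \<Rightarrow> complex"
  assumes lf: "linear_functional u" and qd: "quasi_definite u" and f: "is_factorization u S H"
  shows "det (H m) \<noteq> 0"
proof
  assume d0: "det (H m) = 0"
  have Hc: "H m \<in> carrier_mat (bsize TYPE('v) m) (bsize TYPE('v) m)"
    using f by (simp add: is_factorization_def)
  obtain w where w: "w \<in> carrier_vec (bsize TYPE('v) m)" "w \<noteq> 0\<^sub>v (bsize TYPE('v) m)"
    "H m *\<^sub>v w = 0\<^sub>v (bsize TYPE('v) m)"
    using det_0_iff_vec_prod_zero[OF Hc] d0 by blast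
  define Q :: "'v mpoly" where "Q = (\<Sum>j<bsize TYPE('v) m. cpoly (w $ j) * MOPs S m j)"
  define dQ where "dQ l e = (\<Sum>j<bsize TYPE('v) m. w $ j * S m l $$ (j,e))" for l e
  have Qlin: "Q = lin (Suc m) dQ"
    unfolding Q_def MOPs_def lin_smult lin_sum dQ_def ..
  have uQ: "u (Q * MOPs S l c) = (\<Sum>j<bsize TYPE('v) m. w $ j * u (MOPs S m j * MOPs S l c))" for l c
    unfolding Q_def sum_distrib_right lf_sum[OF lf] mult.assoc lf_smult[OF lf] ..
  have o: "\<forall>l<Suc m. \<forall>c<bsize TYPE('v) l. u (Q * MOPs S l c) = 0"
  proof (intro allI impI)
    fix l c assume l: "l < Suc m" and c: "c < bsize TYPE('v) l"
    show "u (Q * MOPs S l c) = 0"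
    proof (cases "l = m")
      case True
      have "u (Q * MOPs S l c) = (\<Sum>j<bsize TYPE('v) m. H m $$ (c,j) * w $ j)"
        unfolding uQ True
      proof (intro sum.cong refl)
        fix j assume "j \<in> {..<bsize TYPE('v) m}"
        then have j: "j < bsize TYPE('v) m" by simp
        have "u (MOPs S m j * MOPs S m c) = u (MOPs S m c * (MOPs S m j :: 'v mpoly))"
          by (simp add: mult.commute)
        then show "w $ j * u (MOPs S m j * MOPs S m c) = H m $$ (c,j) * w $ j"
          using fact_poly[OF lf f c[unfolded True] j] by simp
      qed
      also have "\<dots> = (H m *\<^sub>v w) $ c"
        using Hc w(1) c True by (simp add: scalar_prod_def atLeast0LessThan)
      also have "\<dots> = 0" using w(3) c True by simp
      finally show ?thesis .
    next
      case False
      then show ?thesis unfolding uQ using fact_poly[OF lf f] c l by (intro sum.neutral) auto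
    qed
  qed
  have oc: "\<forall>l<Suc m. \<forall>c<bsize TYPE('v) l. u (lin (Suc m) dQ * chi l c) = 0"
    using conv[OF lf _ o] fact_diag[OF f] Qlin by auto
  have "w = 0\<^sub>v (bsize TYPE('v) m)"
  proof (rule eq_vecI)
    fix e assume "e < dim_vec (0\<^sub>v (bsize TYPE('v) m) :: complex vec)"
    then have e: "e < bsize TYPE('v) m" by simp
    have "dQ m e = w $ e"
    proof -
      have "dQ m e = (\<Sum>j<bsize TYPE('v) m. if j = e then w $ j else 0)"
        unfolding dQ_def fact_diag[OF f] using e by (intro sum.cong refl) auto
      also have "\<dots> = w $ e" using e by simp
      finally show ?thesis .
    qed
    moreover have "dQ m e = 0" using nondeg[OF lf qd oc, of m e] e by simp
    ultimately show "w $ e = 0\<^sub>v (bsize TYPE('v) m) $ e" using e by simp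
  qed (use w(1) in simp)
  with w(2) show False by simp
qed

lemma H_inverse:
  fixes u :: "'v::{finite,linorder} mpoly \<Rightarrow> complex"
  assumes lf: "linear_functional u" and qd: "quasi_definite u" and f: "is_factorization u S H"
  shows "the (mat_inverse (H m)) * H m = 1\<^sub>m (bsize TYPE('v) m)"
    "the (mat_inverse (H m)) \<in> carrier_mat (bsize TYPE('v) m) (bsize TYPE('v) m)"
  using inverse_exists[OF _ H_det[OF lf qd f, of m], of "bsize TYPE('v) m"] f
  by (auto simp: is_factorization_def)

definition islin :: "nat \<Rightarrow> 'v::{finite,linorder} mpoly \<Rightarrow> bool" where
  "islin N q \<longleftrightarrow> (\<exists>d. q = lin N d)"

lemma islin_add: "islin N p \<Longrightarrow> islin N q \<Longrightarrow> islin N (p + q)"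
  unfolding islin_def using lin_add by metis

lemma islin_smult: "islin N p \<Longrightarrow> islin N (cpoly c * p)"
  unfolding islin_def using lin_smult by metis

lemma islin_zero: "islin N 0"
  unfolding islin_def using lin_zero by metis

lemma islin_sum: "(\<And>x. x \<in> A \<Longrightarrow> islin N (f x)) \<Longrightarrow> islin N (\<Sum>x\<in>A. f x)"
  by (induction A rule: infinite_finite_induct) (auto simp: islin_zero islin_add)

lemma islin_MOPs: "m < N \<Longrightarrow> islin N (MOPs S m b)"
  unfolding islin_def MOPs_def using lin_extend[of "Suc m" N] by auto

lemma part_H:
  fixes u v :: "'v::{finite,linorder} mpoly \<Rightarrow> complex"
  assumes lf: "linear_functional u" and lv: "linear_functional v"
    and f: "is_factorization u S H" and fh: "is_factorization (\<lambda>p. u p + v p) Sh Hh"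
    and ij: "i < bsize TYPE('v) n" "j < bsize TYPE('v) n"
  shows "Hh n $$ (i,j) = H n $$ (i,j) + v ((MOPs Sh n i :: 'v mpoly) * MOPs S n j)"
proof -
  let ?w = "\<lambda>p. u p + v p"
  have lfw: "linear_functional ?w" by (rule lf_plus[OF lf lv])
  let ?P = "MOPs S :: nat \<Rightarrow> nat \<Rightarrow> 'v mpoly" and ?Ph = "MOPs Sh :: nat \<Rightarrow> nat \<Rightarrow> 'v mpoly"
  have dj: "?Ph n j = ?P n j + lin n (\<lambda>m e. Sh n m $$ (j,e) - S n m $$ (j,e))"
    using MOPs_diff[OF fh f ij(2)] by (simp add: algebra_simps)
  have di: "?Ph n i = ?P n i + lin n (\<lambda>m e. Sh n m $$ (i,e) - S n m $$ (i,e))"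
    using MOPs_diff[OF fh f ij(1)] by (simp add: algebra_simps)
  have z1: "?w (?Ph n i * lin n (\<lambda>m e. Sh n m $$ (j,e) - S n m $$ (j,e))) = 0"
    using ortho_chi[OF lfw fh _ ij(1)] by (intro ortho_lin[OF lfw, where k=n]) auto
  have z2: "u (?P n j * lin n (\<lambda>m e. Sh n m $$ (i,e) - S n m $$ (i,e))) = 0"
    using ortho_chi[OF lf f _ ij(2)] by (intro ortho_lin[OF lf, where k=n]) auto
  have "Hh n $$ (i,j) = ?w (?Ph n i * ?Ph n j)" using fact_poly[OF lfw fh ij] by simp
  also have "\<dots> = ?w (?Ph n i * ?P n j)"
    unfolding dj distrib_left lf_add[OF lfw] z1 by simp
  also have "u (?Ph n i * ?P n j) = u (?P n j * ?Ph n i)" by (simp add: mult.commute)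
  also have "\<dots> = u (?P n j * ?P n i)"
    unfolding di distrib_left lf_add[OF lf] z2 by simp
  also have "\<dots> = H n $$ (i,j)"
    using fact_poly[OF lf f ij] by (simp add: mult.commute)
  finally show ?thesis by simp
qed

lemma part_D:
  fixes u v :: "'v::{finite,linorder} mpoly \<Rightarrow> complex"
  assumes lf: "linear_functional u" and lv: "linear_functional v" and qd: "quasi_definite u"
    and f: "is_factorization u S H" and fh: "is_factorization (\<lambda>p. u p + v p) Sh Hh"
    and i: "i < bsize TYPE('v) n"
  shows "(MOPs Sh n i :: 'v mpoly) = MOPs S n i -
     (\<Sum>m<n. \<Sum>a<bsize TYPE('v) m. \<Sum>b<bsize TYPE('v) m.
        cpoly (v (MOPs Sh n i * MOPs S m a) * the (mat_inverse (H m)) $$ (a,b)) * MOPs S m b)"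
proof -
  let ?w = "\<lambda>p. u p + v p"
  have lfw: "linear_functional ?w" by (rule lf_plus[OF lf lv])
  let ?P = "MOPs S :: nat \<Rightarrow> nat \<Rightarrow> 'v mpoly" and ?Ph = "MOPs Sh :: nat \<Rightarrow> nat \<Rightarrow> 'v mpoly"
  define cf where "cf m a = v (?Ph n i * ?P m a)" for m a
  define Hi where "Hi m = the (mat_inverse (H m))" for m
  define R where "R = (\<Sum>m<n. \<Sum>a<bsize TYPE('v) m. \<Sum>b<bsize TYPE('v) m.
        cpoly (cf m a * Hi m $$ (a,b)) * ?P m b)"
  define D where "D = ?Ph n i - ?P n i + R"
  have "islin n D"
  proof -
    have "islin n (?Ph n i - ?P n i)" unfolding islin_def using MOPs_diff[OF fh f i] by blast
    moreover have "islin n R" unfolding R_def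
      by (intro islin_sum islin_smult islin_MOPs) auto
    ultimately show ?thesis unfolding D_def by (rule islin_add)
  qed
  then obtain d where Dd: "D = lin n d" unfolding islin_def by blast
  have oP: "u (D * ?P k c) = 0" if kc: "k < n" "c < bsize TYPE('v) k" for k c
  proof -
    have Hk: "H k \<in> carrier_mat (bsize TYPE('v) k) (bsize TYPE('v) k)"
      using f by (simp add: is_factorization_def)
    have "?w (?Ph n i * ?P k c) = 0"
      unfolding MOPs_def[of S k c]
      using ortho_chi[OF lfw fh _ i] kc by (intro ortho_lin[OF lfw, where k=n]) auto
    then have t1: "u (?Ph n i * ?P k c) = - cf k c"
      by (simp add: cf_def eq_neg_iff_add_eq_0)
    have t2: "u (?P n i * ?P k c) = 0" using fact_poly[OF lf f i kc(2)] kc by simp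
    have "u (R * ?P k c) = (\<Sum>m<n. \<Sum>a<bsize TYPE('v) m. \<Sum>b<bsize TYPE('v) m.
        cf m a * Hi m $$ (a,b) * u (?P m b * ?P k c))"
      unfolding R_def sum_distrib_right lf_sum[OF lf] mult.assoc lf_smult[OF lf] ..
    also have "\<dots> = (\<Sum>m<n. if m = k then (\<Sum>a<bsize TYPE('v) k. \<Sum>b<bsize TYPE('v) k.
        cf k a * (Hi k $$ (a,b) * H k $$ (b,c))) else 0)"
      using fact_poly[OF lf f _ kc(2)] by (intro sum.cong refl) (auto simp: mult.assoc)
    also have "\<dots> = (\<Sum>a<bsize TYPE('v) k. \<Sum>b<bsize TYPE('v) k. cf k a * (Hi k $$ (a,b) * H k $$ (b,c)))"
      using kc by simp
    also have "\<dots> = (\<Sum>a<bsize TYPE('v) k. cf k a * (Hi k * H k) $$ (a,c))"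
    proof (intro sum.cong refl)
      fix a assume "a \<in> {..<bsize TYPE('v) k}"
      then show "(\<Sum>b<bsize TYPE('v) k. cf k a * (Hi k $$ (a,b) * H k $$ (b,c))) = cf k a * (Hi k * H k) $$ (a,c)"
        using H_inverse(2)[OF lf qd f, of k] Hk kc
        by (simp add: Hi_def scalar_prod_def atLeast0LessThan sum_distrib_left)
    qed
    also have "\<dots> = (\<Sum>a<bsize TYPE('v) k. if a = c then cf k a else 0)"
      using H_inverse(1)[OF lf qd f, of k] kc by (intro sum.cong refl) (auto simp: Hi_def)
    also have "\<dots> = cf k c" using kc by simp
    finally show ?thesis unfolding D_def
      by (simp add: distrib_right left_diff_distrib lf_add[OF lf] lf_diff[OF lf] t1 t2)
  qed
  have oc: "\<forall>k<n. \<forall>c<bsize TYPE('v) k. u (lin n d * chi k c) = 0"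
    using conv[OF lf _, of S n D] oP fact_diag[OF f] Dd by auto
  have "D = 0" unfolding Dd lin_def
    using nondeg[OF lf qd oc] by (intro sum.neutral ballI) auto
  then show ?thesis unfolding D_def R_def cf_def Hi_def by (simp add: algebra_simps eq_neg_iff_add_eq_0)
qed

theorem mainTheorem14:
  fixes u v :: "'v::{finite,linorder} mpoly \<Rightarrow> complex" and n :: nat
  assumes "linear_functional u" and "linear_functional v"
    and "quasi_definite u" and "quasi_definite (\<lambda>p. u p + v p)"
  shows "(\<forall>i<bsize TYPE('v) n. \<forall>x.
           eval_mpoly (MOP (\<lambda>p. u p + v p) n $ i) x =
           eval_mpoly (MOP u n $ i) x - v (MOP (\<lambda>p. u p + v p) n $ i * CD_kernel_y u n x))
         \<and> Hfac (\<lambda>p. u p + v p) n = Hfac u n +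
           mat (bsize TYPE('v) n) (bsize TYPE('v) n)
             (\<lambda>(i,j). v (MOP (\<lambda>p. u p + v p) n $ i * MOP u n $ j))"
proof -
  note lf = assms(1) and lv = assms(2) and qd = assms(3) and qdw = assms(4)
  let ?w = "\<lambda>p. u p + v p"
  have lfw: "linear_functional ?w" by (rule lf_plus[OF lf lv])
  have f: "is_factorization u (Sfac u) (Hfac u)" by (rule fact_Sfac[OF lf qd])
  have fh: "is_factorization ?w (Sfac ?w) (Hfac ?w)" by (rule fact_Sfac[OF lfw qdw])
  let ?P = "MOPs (Sfac u) :: nat \<Rightarrow> nat \<Rightarrow> 'v mpoly" and ?Ph = "MOPs (Sfac ?w) :: nat \<Rightarrow> nat \<Rightarrow> 'v mpoly"
  let ?Hi = "\<lambda>m. the (mat_inverse (Hfac u m))"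
  have part1: "eval_mpoly (MOP ?w n $ i) x =
           eval_mpoly (MOP u n $ i) x - v (MOP ?w n $ i * CD_kernel_y u n x)"
    if i: "i < bsize TYPE('v) n" for i x
  proof -
    have CD: "v (?Ph n i * CD_kernel_y u n x) = (\<Sum>m<n. \<Sum>a<bsize TYPE('v) m. \<Sum>b<bsize TYPE('v) m.
        v (?Ph n i * ?P m a) * ?Hi m $$ (a,b) * eval_mpoly (?P m b) x)"
      unfolding CD_kernel_y_def sum_distrib_left lf_sum[OF lv]
    proof (intro sum.cong refl)
      fix m a b assume "a \<in> {..<bsize TYPE('v) m}" "b \<in> {..<bsize TYPE('v) m}"
      then have ab: "a < bsize TYPE('v) m" "b < bsize TYPE('v) m" by auto
      have "?Ph n i * (?P m a * cpoly (?Hi m $$ (a,b) * eval_mpoly (?P m b) x)) =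
            cpoly (?Hi m $$ (a,b) * eval_mpoly (?P m b) x) * (?Ph n i * ?P m a)"
        by (simp add: mult_ac)
      then have "v (?Ph n i * (?P m a * cpoly (?Hi m $$ (a,b) * eval_mpoly (?P m b) x))) =
         (?Hi m $$ (a,b) * eval_mpoly (?P m b) x) * v (?Ph n i * ?P m a)"
        by (simp only: lf_smult[OF lv])
      then show "v (?Ph n i * (MOP u m $ a * cpoly (?Hi m $$ (a,b) * eval_mpoly (MOP u m $ b) x))) =
         v (?Ph n i * ?P m a) * ?Hi m $$ (a,b) * eval_mpoly (?P m b) x"
        using ab by (simp add: MOP_eq)
    qed
    have "eval_mpoly (?Ph n i) x = eval_mpoly (?P n i) x - (\<Sum>m<n. \<Sum>a<bsize TYPE('v) m. \<Sum>b<bsize TYPE('v) m.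
        v (?Ph n i * ?P m a) * ?Hi m $$ (a,b) * eval_mpoly (?P m b) x)"
      by (subst part_D[OF lf lv qd f fh i]) (simp add: eval_diff eval_sum eval_smult)
    then show ?thesis using i by (simp add: MOP_eq CD)
  qed
  have Hc: "Hfac ?w n \<in> carrier_mat (bsize TYPE('v) n) (bsize TYPE('v) n)"
    "Hfac u n \<in> carrier_mat (bsize TYPE('v) n) (bsize TYPE('v) n)"
    using f fh by (auto simp: is_factorization_def)
  have part2: "Hfac ?w n = Hfac u n + mat (bsize TYPE('v) n) (bsize TYPE('v) n)
             (\<lambda>(i,j). v (MOP ?w n $ i * MOP u n $ j))"
  proof (rule eq_matI)
    fix i j assume "i < dim_row (Hfac u n + mat (bsize TYPE('v) n) (bsize TYPE('v) n)
             (\<lambda>(i,j). v (MOP ?w n $ i * MOP u n $ j)))"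
      "j < dim_col (Hfac u n + mat (bsize TYPE('v) n) (bsize TYPE('v) n)
             (\<lambda>(i,j). v (MOP ?w n $ i * MOP u n $ j)))"
    then have ij: "i < bsize TYPE('v) n" "j < bsize TYPE('v) n" using Hc by auto
    show "Hfac ?w n $$ (i,j) = (Hfac u n + mat (bsize TYPE('v) n) (bsize TYPE('v) n)
             (\<lambda>(i,j). v (MOP ?w n $ i * MOP u n $ j))) $$ (i,j)"
      using part_H[OF lf lv f fh ij] ij Hc by (simp add: MOP_eq)
  qed (use Hc in auto)
  show ?thesis using part1 part2 by blast
qed

end
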